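(* Let $\rho>0$, $L\ge1$, $\bar\eta>0$, and let $X$ have density $f(x)=2K_0(2\sqrt x)$ on $(0,\infty)$. Then $$\bar P_b:=E\!\left[Q\!\left(\sqrt{\tfrac{\rho L^2\bar\eta X}{2}}\right)\right]=\frac{2}{\pi L\sqrt{\rho\bar\eta}}\int_0^{\pi/2}\exp\!\left(\frac{2\sin^2\theta}{\rho L^2\bar\eta}\right)W_{-\frac12,0}\!\left(\frac{4\sin^2\theta}{\rho L^2\bar\eta}\right)\sin\theta\,d\theta .$$
   Context: $Q(y)=\frac{1}{\sqrt{2\pi}}\int_y^\infty e^{-t^2/2}dt$ is the Gaussian Q-function; $K_0$ is the zeroth-order modified Bessel function of the second kind; $W_{\kappa,\mu}$ is the Whittaker function, $W_{\kappa,\mu}(z)=e^{-z/2}z^{\mu+1/2}U(\tfrac12+\mu-\kappa,1+2\mu,z)$ with $U$ Tricomi's confluent hypergeometric function. *)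

theory Defs
  imports "HOL-Probability.Probability"
begin

definition gaussQ :: "real \<Rightarrow> real" where
  "gaussQ y = (1 / sqrt (2 * pi)) * (LBINT t:{y..}. exp (- (t ^ 2) / 2))"

definition besselK0 :: "real \<Rightarrow> real" where
  "besselK0 x = (LBINT t:{0..}. exp (- x * cosh t))"

definition tricomiU :: "real \<Rightarrow> real \<Rightarrow> real \<Rightarrow> real" where
  "tricomiU a b z = (1 / Gamma a) *
     (LBINT t:{0<..}. exp (- z * t) * t powr (a - 1) * (1 + t) powr (b - a - 1))"

definition whittakerW :: "real \<Rightarrow> real \<Rightarrow> real \<Rightarrow> real" where
  "whittakerW \<kappa> \<mu> z = exp (- z / 2) * z powr (\<mu> + 1/2) * tricomiU (1/2 + \<mu> - \<kappa>) (1 + 2 * \<mu>) z"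

end

theory Submission
  imports Defs
begin

lemma meas_int_lborel:
  fixes f :: "real \<Rightarrow> real \<Rightarrow> real"
  assumes "case_prod f \<in> borel_measurable (borel \<Otimes>\<^sub>M borel)"
  shows "(\<lambda>x. \<integral>y. f x y \<partial>lborel) \<in> borel_measurable borel"
proof -
  have "case_prod f \<in> borel_measurable (borel \<Otimes>\<^sub>M lborel)"
    using assms by (simp add: measurable_cong_sets[OF sets_pair_measure_cong[OF refl sets_lborel] refl])
  then show ?thesis by (rule lborel.borel_measurable_lebesgue_integral)
qed

lemma cosh_meas[measurable]: "(cosh :: real \<Rightarrow> real) \<in> borel_measurable borel"
  unfolding cosh_def[abs_def] by measurable

lemma gaussQ_meas[measurable]: "gaussQ \<in> borel_measurable borel"
  unfolding gaussQ_def set_lebesgue_integral_def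
  by (intro borel_measurable_times borel_measurable_const meas_int_lborel) (simp add: indicator_def)

lemma besselK0_meas[measurable]: "besselK0 \<in> borel_measurable borel"
  unfolding besselK0_def set_lebesgue_integral_def
  by (intro meas_int_lborel) (simp add: indicator_def)

lemma tricomi_meas[measurable]: "(\<lambda>z. tricomiU a b z) \<in> borel_measurable borel"
  unfolding tricomiU_def set_lebesgue_integral_def
  by (intro borel_measurable_times borel_measurable_const meas_int_lborel) (simp add: indicator_def)

lemma GN: assumes "k > 0"
  shows "(\<integral>\<^sup>+t. ennreal (exp (- k * t\<^sup>2)) * indicator {0..} t \<partial>lborel) = ennreal (sqrt pi / (2 * sqrt k))"
proof -
  have 0: "(\<integral>\<^sup>+x. ennreal (indicator {0..} x *\<^sub>R exp (- x\<^sup>2)) \<partial>lborel) = ennreal (sqrt pi / 2)"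
    using gaussian_moment_0 by (subst nn_integral_eq_integral) (auto simp: has_bochner_integral_iff)
  have "(\<integral>\<^sup>+t. ennreal (exp (- k * t\<^sup>2)) * indicator {0..} t \<partial>lborel)
     = ennreal (1 / sqrt k) * (\<integral>\<^sup>+x. ennreal (exp (- k * (0 + (1/sqrt k) * x)\<^sup>2)) * indicator {0..} (0 + (1/sqrt k) * x) \<partial>lborel)"
    by (subst nn_integral_real_affine[where c="1/sqrt k" and t=0]) (use assms in auto)
  also have "\<dots> = ennreal (1 / sqrt k) * (\<integral>\<^sup>+x. ennreal (indicator {0..} x *\<^sub>R exp (- x\<^sup>2)) \<partial>lborel)"
    using assms by (intro arg_cong2[where f="(*)"] refl nn_integral_cong)
      (auto simp: power_divide zero_le_divide_iff split: split_indicator)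
  also have "\<dots> = ennreal (sqrt pi / (2 * sqrt k))"
    using 0 assms by (simp add: ennreal_mult[symmetric])
  finally show ?thesis .
qed

lemma gaussQ_nn:
  "ennreal (gaussQ y) = (\<integral>\<^sup>+t. ennreal (std_normal_density t) * indicator {y..} t \<partial>lborel)"
proof -
  have int: "integrable lborel (\<lambda>t. indicator {y..} t * std_normal_density t)"
    using integrable_mult_indicator[OF _ integrable_normal_density[where \<mu>=0 and \<sigma>=1], of "{y..}"] by simp
  have "gaussQ y = (\<integral>t. indicator {y..} t * std_normal_density t \<partial>lborel)"
    unfolding gaussQ_def set_lebesgue_integral_def std_normal_density_def
    by (simp add: integral_mult_right_zero[symmetric] ac_simps del: integral_mult_right_zero)
  also have "ennreal \<dots> = (\<integral>\<^sup>+t. ennreal (indicator {y..} t * std_normal_density t) \<partial>lborel)"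
    using int by (subst nn_integral_eq_integral) auto
  also have "\<dots> = (\<integral>\<^sup>+t. ennreal (std_normal_density t) * indicator {y..} t \<partial>lborel)"
    by (intro nn_integral_cong) (simp split: split_indicator)
  finally show ?thesis .
qed

lemma E1: assumes "T \<ge> 0" "p > 0"
  shows "(\<integral>\<^sup>+x. ennreal (exp (- p * x)) * indicator {0..T} x \<partial>lborel) = ennreal ((1 - exp (- p * T)) / p)"
proof -
  have c: "continuous_on {0..T} (\<lambda>x. exp (- p * x))" by (intro continuous_intros)
  have int: "integrable lborel (\<lambda>x. indicator {0..T} x *\<^sub>R exp (- p * x))"
    using borel_integrable_atLeastAtMost'[OF c] by (simp add: set_integrable_def)
  have "(\<integral>x. indicator {0..T} x *\<^sub>R exp (- p * x) \<partial>lborel) = (- exp (- p * T) / p) - (- exp (- p * 0) / p)"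
    using assms
    by (intro integral_FTC_atLeastAtMost c)
       (auto intro!: derivative_eq_intros simp: has_real_derivative_iff_has_vector_derivative[symmetric] field_simps)
  also have "\<dots> = (1 - exp (- p * T)) / p" by (simp add: diff_divide_distrib)
  finally have eq: "(\<integral>x. indicator {0..T} x *\<^sub>R exp (- p * x) \<partial>lborel) = (1 - exp (- p * T)) / p" .
  have "(\<integral>\<^sup>+x. ennreal (exp (- p * x)) * indicator {0..T} x \<partial>lborel)
      = (\<integral>\<^sup>+x. ennreal (indicator {0..T} x *\<^sub>R exp (- p * x)) \<partial>lborel)"
    by (intro nn_integral_cong) (simp split: split_indicator)
  also have "\<dots> = ennreal ((1 - exp (- p * T)) / p)"
    using int eq by (subst nn_integral_eq_integral) auto
  finally show ?thesis .
qed


lemma pred_in_atLeast[measurable (raw)]: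
  fixes f g :: "'a \<Rightarrow> real"
  shows "f \<in> borel_measurable M \<Longrightarrow> g \<in> borel_measurable M \<Longrightarrow> Measurable.pred M (\<lambda>x. f x \<in> {g x..})"
  by (simp add: atLeast_iff)

lemma gaussQ_nonneg: "gaussQ y \<ge> 0"
  unfolding gaussQ_def set_lebesgue_integral_def
  by (auto intro!: Bochner_Integration.integral_nonneg split: split_indicator)

lemma sqrt_le_iff_aux: assumes "a > 0" "x > 0" "t \<ge> 0"
  shows "(sqrt (a * x) \<le> t) = (x \<le> t\<^sup>2 / a)"
proof -
  have "(sqrt (a * x) \<le> t) = (sqrt (a * x) \<le> sqrt (t\<^sup>2))" using assms by simp
  also have "\<dots> = (a * x \<le> t\<^sup>2)" by (rule real_sqrt_le_iff)
  also have "\<dots> = (x \<le> t\<^sup>2 / a)" using assms by (simp add: field_simps)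
  finally show ?thesis .
qed

lemma alg_A: assumes "a > 0" "p > 0"
  shows "1 / (p * sqrt (2 * pi)) * (sqrt pi / (2 * sqrt (1/2)) - sqrt pi / (2 * sqrt (1/2 + p / a)))
       = (1 - sqrt (a / (a + 2 * p))) / (2 * p)"
proof -
  have s2: "sqrt (2 * pi) = sqrt 2 * sqrt pi" by (simp add: real_sqrt_mult)
  have h: "sqrt (1/2::real) = 1 / sqrt 2" by (simp add: real_sqrt_divide)
  have k: "sqrt (1/2 + p / a) = sqrt (a + 2 * p) / (sqrt 2 * sqrt a)"
  proof -
    have "1/2 + p / a = (a + 2 * p) / (2 * a)" using assms by (simp add: field_simps)
    then show ?thesis by (simp add: real_sqrt_divide real_sqrt_mult)
  qed
  have q: "sqrt (a / (a + 2 * p)) = sqrt a / sqrt (a + 2 * p)" by (simp add: real_sqrt_divide)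
  have pos: "sqrt pi > 0" "sqrt 2 > (0::real)" "sqrt a > 0" "sqrt (a + 2 * p) > 0" using assms by auto
  define A where "A = sqrt a" define B where "B = sqrt (a + 2*p)" define S where "S = sqrt pi" define T where "T = sqrt (2::real)"
  have "1 / (p * (T * S)) * (S / (2 * (1 / T)) - S / (2 * (B / (T * A)))) = (1 - A / B) / (2 * p)"
    using pos assms unfolding A_def[symmetric] B_def[symmetric] S_def[symmetric] T_def[symmetric]
    by (simp add: field_simps)
  then show ?thesis unfolding s2 h k q A_def B_def S_def T_def .
qed

lemma LA: assumes "a > 0" "p > 0"
  shows "(\<integral>\<^sup>+x. ennreal (exp (- p * x) * gaussQ (sqrt (a * x))) * indicator {0<..} x \<partial>lborel)
       = ennreal ((1 - sqrt (a / (a + 2 * p))) / (2 * p))"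
proof -
  define k where "k = 1/2 + p / a"
  have kpos: "k > 0" using assms by (simp add: k_def add_pos_pos)
  define C where "C = 1 / (p * sqrt (2 * pi))"
  have Cpos: "C > 0" using assms by (simp add: C_def)
  have "(\<integral>\<^sup>+x. ennreal (exp (- p * x) * gaussQ (sqrt (a * x))) * indicator {0<..} x \<partial>lborel)
      = (\<integral>\<^sup>+x. \<integral>\<^sup>+t. ennreal (exp (- p * x)) * indicator {0<..} x *
            (ennreal (std_normal_density t) * indicator {sqrt (a * x)..} t) \<partial>lborel \<partial>lborel)"
  proof (intro nn_integral_cong)
    fix x :: real
    have "ennreal (exp (- p * x) * gaussQ (sqrt (a * x))) * indicator {0<..} x
        = (ennreal (exp (- p * x)) * indicator {0<..} x) * ennreal (gaussQ (sqrt (a * x)))"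
      by (simp add: ennreal_mult gaussQ_nonneg ac_simps)
    also have "\<dots> = (ennreal (exp (- p * x)) * indicator {0<..} x) *
       (\<integral>\<^sup>+t. ennreal (std_normal_density t) * indicator {sqrt (a * x)..} t \<partial>lborel)"
      by (simp only: gaussQ_nn)
    also have "\<dots> = (\<integral>\<^sup>+t. ennreal (exp (- p * x)) * indicator {0<..} x *
            (ennreal (std_normal_density t) * indicator {sqrt (a * x)..} t) \<partial>lborel)"
      by (rule nn_integral_cmult[symmetric]) measurable
    finally show "ennreal (exp (- p * x) * gaussQ (sqrt (a * x))) * indicator {0<..} x = \<dots>" .
  qed
  also have "\<dots> = (\<integral>\<^sup>+t. \<integral>\<^sup>+x. ennreal (exp (- p * x)) * indicator {0<..} x *
            (ennreal (std_normal_density t) * indicator {sqrt (a * x)..} t) \<partial>lborel \<partial>lborel)"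
    by (rule lborel_pair.Fubini'[symmetric]) measurable
  also have "\<dots> = (\<integral>\<^sup>+t. ennreal (C * (exp (- (1/2) * t\<^sup>2) - exp (- k * t\<^sup>2))) * indicator {0..} t \<partial>lborel)"
  proof (intro nn_integral_cong)
    fix t :: real
    show "(\<integral>\<^sup>+x. ennreal (exp (- p * x)) * indicator {0<..} x *
            (ennreal (std_normal_density t) * indicator {sqrt (a * x)..} t) \<partial>lborel)
        = ennreal (C * (exp (- (1/2) * t\<^sup>2) - exp (- k * t\<^sup>2))) * indicator {0..} t"
    proof (cases "t \<ge> 0")
      case False
      have z: "ennreal (exp (- p * x)) * indicator {0<..} x *
            (ennreal (std_normal_density t) * indicator {sqrt (a * x)..} t) = 0" for x
      proof -
        have "\<not> sqrt (a * x) \<le> t" if "x > 0" using False that assms by (smt (verit) real_sqrt_ge_zero mult_pos_pos)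
        then show ?thesis
          by (auto split: split_indicator)
      qed
      have "(\<integral>\<^sup>+x. ennreal (exp (- p * x)) * indicator {0<..} x *
            (ennreal (std_normal_density t) * indicator {sqrt (a * x)..} t) \<partial>lborel) = 0"
        by (simp only: z) simp
      then show ?thesis using False by simp
    next
      case True
      have "(\<integral>\<^sup>+x. ennreal (exp (- p * x)) * indicator {0<..} x *
            (ennreal (std_normal_density t) * indicator {sqrt (a * x)..} t) \<partial>lborel)
          = (\<integral>\<^sup>+x. ennreal (std_normal_density t) * (ennreal (exp (- p * x)) * indicator {0..t\<^sup>2/a} x) \<partial>lborel)"
      proof (intro nn_integral_cong_AE)
        show "AE x in lborel. ennreal (exp (- p * x)) * indicator {0<..} x *
            (ennreal (std_normal_density t) * indicator {sqrt (a * x)..} t)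
          = ennreal (std_normal_density t) * (ennreal (exp (- p * x)) * indicator {0..t\<^sup>2/a} x)"
          using AE_lborel_singleton[of 0]
        proof eventually_elim
          case (elim x)
          show ?case
          proof (cases "x > 0")
            case True
            then show ?thesis using sqrt_le_iff_aux[OF assms(1) True \<open>t \<ge> 0\<close>]
              by (auto split: split_indicator simp: mult.commute)
          next
            case False
            then show ?thesis using elim by (auto split: split_indicator)
          qed
        qed
      qed
      also have "\<dots> = ennreal (std_normal_density t) * ennreal ((1 - exp (- p * (t\<^sup>2/a))) / p)"
        using True assms E1[of "t\<^sup>2/a" p] by (subst nn_integral_cmult) auto
      also have "\<dots> = ennreal (C * (exp (- (1/2) * t\<^sup>2) - exp (- k * t\<^sup>2)))"
      proof -
        have "exp (- k * t\<^sup>2) = exp (- (1/2) * t\<^sup>2) * exp (- p * (t\<^sup>2/a))"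
          unfolding k_def exp_add[symmetric] by (simp add: field_simps)
        moreover have "0 \<le> (1 - exp (- p * (t\<^sup>2/a))) / p" using assms by simp
        ultimately show ?thesis
          unfolding std_normal_density_def C_def
          by (subst ennreal_mult[symmetric]) (auto simp: field_simps)
      qed
      finally show ?thesis using True by simp
    qed
  qed
  also have "\<dots> = ennreal ((1 - sqrt (a / (a + 2 * p))) / (2 * p))"
  proof -
    have le: "exp (- k * t\<^sup>2) \<le> exp (- (1/2) * t\<^sup>2)" for t
    proof -
      have "0 \<le> p / a * t\<^sup>2" using assms by simp
      then show ?thesis unfolding k_def by (simp add: algebra_simps)
    qed
    have "(\<integral>\<^sup>+t. ennreal (C * (exp (- (1/2) * t\<^sup>2) - exp (- k * t\<^sup>2))) * indicator {0..} t \<partial>lborel)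
         + (\<integral>\<^sup>+t. ennreal (C * exp (- k * t\<^sup>2)) * indicator {0..} t \<partial>lborel)
        = (\<integral>\<^sup>+t. ennreal (C * exp (- (1/2) * t\<^sup>2)) * indicator {0..} t \<partial>lborel)"
      apply (subst nn_integral_add[symmetric])
        apply measurable
      apply (intro nn_integral_cong)
      using Cpos le by (auto simp: ennreal_plus[symmetric] algebra_simps simp del: ennreal_plus split: split_indicator)
    also have "(\<integral>\<^sup>+t. ennreal (C * exp (- (1/2) * t\<^sup>2)) * indicator {0..} t \<partial>lborel)
        = ennreal C * ennreal (sqrt pi / (2 * sqrt (1/2)))"
      using Cpos by (subst GN[symmetric]) (auto simp: nn_integral_cmult[symmetric] ennreal_mult ac_simps)
    also have "(\<integral>\<^sup>+t. ennreal (C * exp (- k * t\<^sup>2)) * indicator {0..} t \<partial>lborel)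
        = ennreal C * ennreal (sqrt pi / (2 * sqrt k))"
      using Cpos kpos by (subst GN[symmetric]) (auto simp: nn_integral_cmult[symmetric] ennreal_mult ac_simps)
    finally have eq0: "(\<integral>\<^sup>+t. ennreal (C * (exp (- (1/2) * t\<^sup>2) - exp (- k * t\<^sup>2))) * indicator {0..} t \<partial>lborel)
         + ennreal C * ennreal (sqrt pi / (2 * sqrt k)) = ennreal C * ennreal (sqrt pi / (2 * sqrt (1/2)))" .
    have mA: "ennreal C * ennreal (sqrt pi / (2 * sqrt k)) = ennreal (C * (sqrt pi / (2 * sqrt k)))"
      by (rule ennreal_mult[symmetric]) (use Cpos kpos in auto)
    have mB: "ennreal C * ennreal (sqrt pi / (2 * sqrt (1/2))) = ennreal (C * (sqrt pi / (2 * sqrt (1/2))))"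
      by (rule ennreal_mult[symmetric]) (use Cpos in auto)
    have eq: "(\<integral>\<^sup>+t. ennreal (C * (exp (- (1/2) * t\<^sup>2) - exp (- k * t\<^sup>2))) * indicator {0..} t \<partial>lborel)
         + ennreal (C * (sqrt pi / (2 * sqrt k))) = ennreal (C * (sqrt pi / (2 * sqrt (1/2))))"
      using eq0 unfolding mA mB .
    have le2: "sqrt pi / (2 * sqrt k) \<le> sqrt pi / (2 * sqrt (1/2))"
    proof -
      have "1/2 \<le> k" using assms unfolding k_def by simp
      then have "sqrt (1/2) \<le> sqrt k" by (rule real_sqrt_le_mono)
      moreover have "0 < sqrt (1/2::real)" by simp
      ultimately show ?thesis using kpos
        by (intro divide_left_mono) (simp_all add: mult_pos_pos)
    qed
    have "(\<integral>\<^sup>+t. ennreal (C * (exp (- (1/2) * t\<^sup>2) - exp (- k * t\<^sup>2))) * indicator {0..} t \<partial>lborel)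
        = ennreal (C * (sqrt pi / (2 * sqrt (1/2)))) - ennreal (C * (sqrt pi / (2 * sqrt k)))"
      by (subst eq[symmetric], rule ennreal_add_diff_cancel_right[symmetric]) simp
    also have "\<dots> = ennreal (C * (sqrt pi / (2 * sqrt (1/2)) - sqrt pi / (2 * sqrt k)))"
      using Cpos kpos le2 by (subst ennreal_minus) (auto simp: algebra_simps)
    also have "\<dots> = ennreal ((1 - sqrt (a / (a + 2 * p))) / (2 * p))"
      unfolding C_def k_def by (rule arg_cong[where f=ennreal]) (rule alg_A[OF assms])
    finally show ?thesis .
  qed
  finally show ?thesis .
qed



lemma LB_alg: assumes "b > 0" "cos x \<noteq> 0"
  shows "1 - sqrt (b / (1 + b)) * (sqrt ((1 + b) / b) * (1 + (tan x)\<^sup>2)) / (1 + (sqrt ((1 + b) / b) * tan x)\<^sup>2)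
       = (sin x)\<^sup>2 / ((sin x)\<^sup>2 + b)"
proof -
  define k where "k = sqrt ((1 + b) / b)"
  have k2: "k\<^sup>2 = (1 + b) / b" unfolding k_def using assms by simp
  have kk: "sqrt (b / (1 + b)) * k = 1" unfolding k_def using assms
    by (simp add: real_sqrt_mult[symmetric])
  have c2: "(cos x)\<^sup>2 = 1 - (sin x)\<^sup>2" by (simp add: cos_squared_eq)
  have cpos: "(cos x)\<^sup>2 > 0" using assms by simp
  have "1 - sqrt (b / (1 + b)) * (k * (1 + (tan x)\<^sup>2)) / (1 + (k * tan x)\<^sup>2)
      = 1 - (1 + (tan x)\<^sup>2) / (1 + k\<^sup>2 * (tan x)\<^sup>2)"
    by (simp add: kk power_mult_distrib mult.assoc[symmetric])
  also have "\<dots> = 1 - 1 / ((cos x)\<^sup>2 + k\<^sup>2 * (sin x)\<^sup>2)"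
    using assms cpos by (simp add: tan_def power_divide field_simps)
  also have "\<dots> = (sin x)\<^sup>2 / ((sin x)\<^sup>2 + b)"
  proof -
    have p1: "b + (sin x)\<^sup>2 > 0" using assms by (simp add: add_pos_nonneg)
    have "(1 - (sin x)\<^sup>2 + (1 + b) / b * (sin x)\<^sup>2) = (b + (sin x)\<^sup>2) / b"
      using assms by (simp add: field_simps)
    then show ?thesis unfolding k2 c2 using assms p1
      by (simp add: field_simps)
  qed
  finally show ?thesis unfolding k_def .
qed


lemma LB: assumes "b > 0"
  shows "(\<integral>\<^sup>+\<theta>. ennreal ((sin \<theta>)\<^sup>2 / ((sin \<theta>)\<^sup>2 + b)) * indicator {0<..<pi/2} \<theta> \<partial>lborel)
       = ennreal (pi / 2 * (1 - sqrt (b / (1 + b))))"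
proof -
  define k where "k = sqrt ((1 + b) / b)"
  have kpos: "k > 0" unfolding k_def using assms by simp
  have ik: "1 / k = sqrt (b / (1 + b))" unfolding k_def using assms by (simp add: real_sqrt_divide)
  define F where "F x = x - sqrt (b / (1 + b)) * arctan (k * tan x)" for x
  define f where "f x = (sin x)\<^sup>2 / ((sin x)\<^sup>2 + b)" for x
  have D: "DERIV F x :> f x" if "0 < x" "x < pi/2" for x
  proof -
    have c: "cos x \<noteq> 0" using that cos_gt_zero_pi[of x] by auto
    have "DERIV F x :> 1 - sqrt (b / (1 + b)) * (k * (1 + (tan x)\<^sup>2)) / (1 + (k * tan x)\<^sup>2)"
      unfolding F_def using c
      by (auto intro!: derivative_eq_intros simp: tan_sec power_inverse divide_simps)
    then show ?thesis using LB_alg[OF assms c] unfolding k_def f_def by simp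
  qed
  have FTC: "set_integrable lborel (einterval 0 (pi/2)) f" "(LBINT x=0..pi/2. f x) = (pi/2 - sqrt (b / (1 + b)) * (pi/2)) - 0"
  proof -
    have lim0: "(F \<longlongrightarrow> 0) (at_right 0)"
    proof -
      have "isCont F 0" unfolding F_def
        by (intro continuous_intros) auto
      then have "(F \<longlongrightarrow> F 0) (at_right 0)"
        by (rule tendsto_mono[OF at_within_le_at isContD])
      then show ?thesis by (simp add: F_def)
    qed
    have lim1: "(F \<longlongrightarrow> pi/2 - sqrt (b / (1 + b)) * (pi/2)) (at_left (pi/2))"
    proof -
      have "filterlim (\<lambda>x. k * tan x) at_top (at_left (pi/2))"
        using kpos by (intro filterlim_tendsto_pos_mult_at_top[OF tendsto_const] filterlim_tan_at_left) auto
      then have "((\<lambda>x. arctan (k * tan x)) \<longlongrightarrow> pi/2) (at_left (pi/2))"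
        by (rule filterlim_compose[OF tendsto_arctan_at_top])
      then show ?thesis unfolding F_def
        by (intro tendsto_intros) (auto intro: tendsto_ident_at)
    qed
    have fnn: "0 \<le> f x" for x unfolding f_def using assms by (simp add: add_nonneg_pos)
    have fc: "isCont f x" if "0 < x" "x < pi/2" for x
      unfolding f_def using assms by (intro continuous_intros) (use add_nonneg_pos[of "(sin x)\<^sup>2" b] in auto)
    show "set_integrable lborel (einterval 0 (pi/2)) f" "(LBINT x=0..pi/2. f x) = (pi/2 - sqrt (b / (1 + b)) * (pi/2)) - 0"
      by (rule interval_integral_FTC_nonneg[where F=F];
          use D fc fnn lim0 lim1 in \<open>auto simp: ereal_tendsto_simps zero_ereal_def\<close>)+
  qed
  have "(\<integral>\<^sup>+\<theta>. ennreal (f \<theta>) * indicator {0<..<pi/2} \<theta> \<partial>lborel)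
      = (\<integral>\<^sup>+\<theta>. ennreal (indicator {0<..<pi/2} \<theta> *\<^sub>R f \<theta>) \<partial>lborel)"
    by (intro nn_integral_cong) (simp split: split_indicator)
  also have "\<dots> = ennreal (LBINT x=0..pi/2. f x)"
    using FTC(1) assms
    by (subst nn_integral_eq_integral)
       (auto simp: set_integrable_def interval_lebesgue_integral_def set_lebesgue_integral_def zero_ereal_def f_def add_nonneg_pos)
  also have "\<dots> = ennreal (pi / 2 * (1 - sqrt (b / (1 + b))))"
    unfolding FTC(2) by (simp add: algebra_simps)
  finally show ?thesis unfolding f_def .
qed



lemma EXP: assumes "c > 0"
  shows "(\<integral>\<^sup>+t. ennreal (exp (- c * t)) * indicator {0..} t \<partial>lborel) = ennreal (1 / c)"
proof -
  have "(\<integral>\<^sup>+t. ennreal (exp (- c * t)) * indicator {0..} t \<partial>lborel) = ennreal (0 - (- exp (- c * 0) / c))"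
  proof (rule nn_integral_FTC_atLeast)
    show "((\<lambda>t. - exp (- c * t) / c) \<longlongrightarrow> 0) at_top"
      using assms by real_asymp
  qed (use assms in \<open>auto intro!: derivative_eq_intros\<close>)
  then show ?thesis by simp
qed

lemma tricomi11: assumes "z > 0"
  shows "ennreal (tricomiU 1 1 z) = (\<integral>\<^sup>+v. ennreal (exp (- v) / (z + v)) * indicator {0<..} v \<partial>lborel)"
proof -
  define h where "h t = exp (- z * t) / (1 + t)" for t :: real
  have eqU: "tricomiU 1 1 z = (\<integral>t. indicator {0<..} t * h t \<partial>lborel)"
    unfolding tricomiU_def set_lebesgue_integral_def h_def
    apply simp
    by (intro Bochner_Integration.integral_cong)
       (auto simp: powr_minus_divide split: split_indicator)
  have fin: "(\<integral>\<^sup>+t. ennreal (indicator {0<..} t * h t) \<partial>lborel) < \<infinity>"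
  proof -
    have "(\<integral>\<^sup>+t. ennreal (indicator {0<..} t * h t) \<partial>lborel)
        \<le> (\<integral>\<^sup>+t. ennreal (exp (- z * t)) * indicator {0..} t \<partial>lborel)"
      by (intro nn_integral_mono) (auto simp: h_def divide_le_eq split: split_indicator)
    also have "\<dots> < \<infinity>" using EXP[OF assms] by simp
    finally show ?thesis .
  qed
  have hnn: "0 \<le> indicator {0<..} t * h t" for t
    by (auto simp: h_def split: split_indicator)
  have int: "integrable lborel (\<lambda>t. indicator {0<..} t * h t)"
    using fin hnn by (intro integrableI_nonneg AE_I2) (auto simp: h_def)
  have "ennreal (tricomiU 1 1 z) = (\<integral>\<^sup>+t. ennreal (indicator {0<..} t * h t) \<partial>lborel)"
    unfolding eqU using int hnn by (subst nn_integral_eq_integral) auto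
  also have "\<dots> = ennreal (1 / z) * (\<integral>\<^sup>+v. ennreal (indicator {0<..} (0 + (1/z) * v) * h (0 + (1/z) * v)) \<partial>lborel)"
    using assms by (subst nn_integral_real_affine[where c="1/z" and t=0]) (auto simp: h_def)
  also have "\<dots> = (\<integral>\<^sup>+v. ennreal (1 / z) * ennreal (indicator {0<..} (0 + (1/z) * v) * h (0 + (1/z) * v)) \<partial>lborel)"
    by (rule nn_integral_cmult[symmetric]) (auto simp: h_def)
  also have "\<dots> = (\<integral>\<^sup>+v. ennreal (exp (- v) / (z + v)) * indicator {0<..} v \<partial>lborel)"
  proof (intro nn_integral_cong)
    fix v :: real
    show "ennreal (1 / z) * ennreal (indicator {0<..} (0 + (1/z) * v) * h (0 + (1/z) * v))
        = ennreal (exp (- v) / (z + v)) * indicator {0<..} v"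
    proof (cases "v > 0")
      case True
      then have "1 / z * (exp (- z * (1/z * v)) / (1 + 1/z * v)) = exp (- v) / (z + v)"
        using assms by (simp add: field_simps)
      then show ?thesis using True assms
        by (simp add: h_def ennreal_mult[symmetric] zero_less_mult_iff)
    next
      case False
      then have "\<not> 0 < v / z" using assms by (simp add: zero_less_divide_iff)
      then show ?thesis using assms False by (simp add: zero_less_mult_iff)
    qed
  qed
  finally show ?thesis .
qed



lemma even_nn:
  fixes g :: "real \<Rightarrow> ennreal"
  assumes [measurable]: "g \<in> borel_measurable borel" and ev: "\<And>u. g (- u) = g u"
  shows "(\<integral>\<^sup>+u. g u \<partial>lborel) = 2 * (\<integral>\<^sup>+u. g u * indicator {0..} u \<partial>lborel)"
proof -
  have "(\<integral>\<^sup>+u. g u \<partial>lborel) = (\<integral>\<^sup>+u. g u * indicator {0..} u + g u * indicator {..<0} u \<partial>lborel)"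
    by (intro nn_integral_cong) (auto split: split_indicator)
  also have "\<dots> = (\<integral>\<^sup>+u. g u * indicator {0..} u \<partial>lborel) + (\<integral>\<^sup>+u. g u * indicator {..<0} u \<partial>lborel)"
    by (rule nn_integral_add) auto
  also have "(\<integral>\<^sup>+u. g u * indicator {..<0} u \<partial>lborel)
      = ennreal \<bar>-1::real\<bar> * (\<integral>\<^sup>+u. g (0 + (-1) * u) * indicator {..<0} (0 + (-1) * u) \<partial>lborel)"
    by (rule nn_integral_real_affine) auto
  also have "\<dots> = (\<integral>\<^sup>+u. g u * indicator {0..} u \<partial>lborel)"
  proof -
    have "(\<integral>\<^sup>+u. g (0 + (-1) * u) * indicator {..<0} (0 + (-1) * u) \<partial>lborel)
        = (\<integral>\<^sup>+u. g u * indicator {0..} u \<partial>lborel)"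
      by (intro nn_integral_cong_AE)
         (use AE_lborel_singleton[of 0] in \<open>eventually_elim, auto simp: ev split: split_indicator\<close>)
    then show ?thesis by simp
  qed
  finally show ?thesis by (simp add: mult_2)
qed


lemma cosh_lower: "u / 2 \<le> cosh (u::real)"
proof -
  have "1 + u \<le> exp u" by (rule exp_ge_add_one_self)
  moreover have "0 < exp (- u)" by simp
  moreover have "cosh u = (exp u + exp (- u)) / 2" by (rule cosh_field_def)
  ultimately have "u \<le> exp u + exp (- u)" by linarith
  then show ?thesis unfolding cosh_field_def by (simp add: field_simps)
qed

lemma K0_nn: assumes "s > 0"
  shows "ennreal (2 * besselK0 (2 * s)) = (\<integral>\<^sup>+v. ennreal (exp (- v - s\<^sup>2 / v) / v) * indicator {0<..} v \<partial>lborel)"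
proof -
  define G where "G u = exp (- (2 * s) * cosh u)" for u
  have Gm[measurable]: "G \<in> borel_measurable borel" unfolding G_def by measurable
  have Gnn: "0 \<le> G u" for u unfolding G_def by simp
  have K: "besselK0 (2 * s) = (\<integral>u. indicator {0..} u * G u \<partial>lborel)"
    unfolding besselK0_def set_lebesgue_integral_def G_def by simp
  have fin: "(\<integral>\<^sup>+u. ennreal (G u) * indicator {0..} u \<partial>lborel) < \<infinity>"
  proof -
    have "(\<integral>\<^sup>+u. ennreal (G u) * indicator {0..} u \<partial>lborel)
        \<le> (\<integral>\<^sup>+u. ennreal (exp (- s * u)) * indicator {0..} u \<partial>lborel)"
    proof (intro nn_integral_mono)
      fix u :: real
      have "- (2 * s) * cosh u \<le> - s * u"
        using cosh_lower[of u] assms by (simp add: mult_left_mono algebra_simps)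
      then show "ennreal (G u) * indicator {0..} u \<le> ennreal (exp (- s * u)) * indicator {0..} u"
        unfolding G_def by (auto split: split_indicator intro!: ennreal_leI)
    qed
    also have "\<dots> < \<infinity>" using EXP[OF assms] by simp
    finally show ?thesis .
  qed
  have half: "ennreal (besselK0 (2 * s)) = (\<integral>\<^sup>+u. ennreal (G u) * indicator {0..} u \<partial>lborel)"
  proof -
    have int: "integrable lborel (\<lambda>u. indicator {0..} u * G u)"
      using fin Gnn by (intro integrableI_nonneg AE_I2)
         (auto simp: nn_integral_set_ennreal mult.commute)
    have "(\<integral>\<^sup>+u. ennreal (G u) * indicator {0..} u \<partial>lborel) = (\<integral>\<^sup>+u. ennreal (indicator {0..} u * G u) \<partial>lborel)"
      by (intro nn_integral_cong) (simp split: split_indicator)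
    also have "\<dots> = ennreal (\<integral>u. indicator {0..} u * G u \<partial>lborel)"
      using int Gnn by (intro nn_integral_eq_integral) auto
    finally show ?thesis unfolding K by simp
  qed
  have whole: "ennreal (2 * besselK0 (2 * s)) = (\<integral>\<^sup>+u. ennreal (G u) \<partial>lborel)"
  proof -
    have "(\<integral>\<^sup>+u. ennreal (G u) \<partial>lborel) = 2 * (\<integral>\<^sup>+u. ennreal (G u) * indicator {0..} u \<partial>lborel)"
      by (rule even_nn) (auto simp: G_def)
    also have "\<dots> = ennreal 2 * ennreal (besselK0 (2 * s))" using half by simp
    also have "\<dots> = ennreal (2 * besselK0 (2 * s))"
      by (rule ennreal_mult[symmetric]) (auto simp: K Gnn intro!: Bochner_Integration.integral_nonneg)
    finally show ?thesis by simp
  qed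
  have finw: "(\<integral>\<^sup>+u. ennreal (G u) \<partial>lborel) < \<infinity>" unfolding whole[symmetric] by simp
  have intG: "integrable lborel G"
    using finw Gnn by (intro integrableI_nonneg AE_I2) auto
  define f where "f v = exp (- v - s\<^sup>2 / v) / v" for v
  define g where "g u = s * exp u" for u
  have fg: "f (g u) * g u = G u" for u
  proof -
    have "- (s * exp u) - s\<^sup>2 / (s * exp u) = - (2 * s) * cosh u"
      using assms by (simp add: cosh_field_def field_simps power2_eq_square exp_minus)
    then show ?thesis unfolding f_def g_def G_def using assms by simp
  qed
  have SUB: "set_integrable lborel (einterval (ereal 0) \<infinity>) f"
            "(LBINT x=ereal 0..\<infinity>. f x) = (LBINT x=-\<infinity>..\<infinity>. (f (g x) * g x))"
  proof -
    have lim0: "((ereal \<circ> g \<circ> real_of_ereal) \<longlongrightarrow> ereal 0) (at_right (-\<infinity>))"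
      unfolding ereal_tendsto_simps g_def using assms by real_asymp
    have lim1: "((ereal \<circ> g \<circ> real_of_ereal) \<longlongrightarrow> \<infinity>) (at_left \<infinity>)"
      unfolding ereal_tendsto_simps g_def using assms by real_asymp
    have si: "set_integrable lborel (einterval (-\<infinity>) \<infinity>) (\<lambda>x. f (g x) * g x)"
      unfolding set_integrable_def fg using intG by (simp add: einterval_iff)
    have dg: "DERIV g x :> g x" for x unfolding g_def by (auto intro!: derivative_eq_intros)
    have cf: "isCont f (g x)" for x
      unfolding f_def g_def using assms by (intro continuous_intros) auto
    have cg: "isCont g x" for x unfolding g_def by (intro continuous_intros)
    have fnn: "0 \<le> f (g x)" for x unfolding f_def g_def using assms by simp
    have gnn: "0 \<le> g x" for x unfolding g_def using assms by simp
    show "set_integrable lborel (einterval (ereal 0) \<infinity>) f"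
         "(LBINT x=ereal 0..\<infinity>. f x) = (LBINT x=-\<infinity>..\<infinity>. (f (g x) * g x))"
    proof -
      show "set_integrable lborel (einterval (ereal 0) \<infinity>) f"
        by (rule interval_integral_substitution_nonneg(1)[where g=g and g'=g and f=f and a="-\<infinity>" and b=\<infinity>
              and A="ereal 0" and B=\<infinity>, OF _ _ _ _ _ _ lim0 lim1 si])
           (simp_all add: dg cf cg fnn gnn)
      show "(LBINT x=ereal 0..\<infinity>. f x) = (LBINT x=-\<infinity>..\<infinity>. (f (g x) * g x))"
        by (rule interval_integral_substitution_nonneg(2)[where g=g and g'=g and f=f and a="-\<infinity>" and b=\<infinity>
              and A="ereal 0" and B=\<infinity>, OF _ _ _ _ _ _ lim0 lim1 si])
           (simp_all add: dg cf cg fnn gnn)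
    qed
  qed
  have "(\<integral>\<^sup>+v. ennreal (f v) * indicator {0<..} v \<partial>lborel)
      = (\<integral>\<^sup>+v. ennreal (indicator {0<..} v *\<^sub>R f v) \<partial>lborel)"
    by (intro nn_integral_cong) (simp split: split_indicator)
  also have "\<dots> = ennreal (LBINT x=ereal 0..\<infinity>. f x)"
  proof -
    have fnn2: "0 \<le> indicator {0<..} x *\<^sub>R f x" for x
      by (auto simp: f_def split: split_indicator)
    have "(\<integral>\<^sup>+v. ennreal (indicator {0<..} v *\<^sub>R f v) \<partial>lborel) = ennreal (\<integral>v. indicator {0<..} v *\<^sub>R f v \<partial>lborel)"
      using SUB(1) fnn2 unfolding set_integrable_def
      by (intro nn_integral_eq_integral AE_I2) auto
    then show ?thesis by (simp add: interval_lebesgue_integral_def set_lebesgue_integral_def)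
  qed
  also have "\<dots> = ennreal (\<integral>u. G u \<partial>lborel)"
    unfolding SUB(2) fg by (simp add: interval_lebesgue_integral_def set_lebesgue_integral_def einterval_iff)
  also have "\<dots> = (\<integral>\<^sup>+u. ennreal (G u) \<partial>lborel)"
    using intG Gnn by (subst nn_integral_eq_integral) auto
  finally show ?thesis unfolding whole f_def by (rule sym)
qed



definition Phi :: "real \<Rightarrow> real \<Rightarrow> real" where
  "Phi c v = exp (- v) / 2 * (1 - sqrt (c * v / (c * v + 4)))"

lemma alg_alpha: assumes "c > 0" "v > 0"
  shows "exp (- v) / v * ((1 - sqrt (c / 2 / (c / 2 + 2 * (1 / v)))) / (2 * (1 / v))) = Phi c v"
proof -
  have "c / 2 / (c / 2 + 2 * (1 / v)) = c * v / (c * v + 4)"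
    using assms by (simp add: field_simps)
  then show ?thesis unfolding Phi_def using assms by (simp add: field_simps)
qed

lemma LHS_part:
  assumes c: "c > 0" and P: "prob_space M"
    and D: "distributed M lborel X (\<lambda>x. ennreal (indicator {0<..} x * (2 * besselK0 (2 * sqrt x))))"
  shows "integral\<^sup>L M (\<lambda>\<omega>. gaussQ (sqrt (c * X \<omega> / 2)))
       = enn2real (\<integral>\<^sup>+v. ennreal (Phi c v) * indicator {0<..} v \<partial>lborel)"
proof -
  define a where "a = c / 2"
  have apos: "a > 0" using c by (simp add: a_def)
  have Xm[measurable]: "X \<in> borel_measurable M"
    using distributed_measurable[OF D] by simp
  have "integral\<^sup>L M (\<lambda>\<omega>. gaussQ (sqrt (c * X \<omega> / 2)))
      = enn2real (\<integral>\<^sup>+\<omega>. ennreal (gaussQ (sqrt (c * X \<omega> / 2))) \<partial>M)"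
    by (rule integral_eq_nn_integral) (auto simp: gaussQ_nonneg)
  also have "(\<integral>\<^sup>+\<omega>. ennreal (gaussQ (sqrt (c * X \<omega> / 2))) \<partial>M)
      = (\<integral>\<^sup>+x. ennreal (indicator {0<..} x * (2 * besselK0 (2 * sqrt x))) * ennreal (gaussQ (sqrt (c * x / 2))) \<partial>lborel)"
    by (rule distributed_nn_integral[OF D, symmetric]) measurable
  also have "\<dots> = (\<integral>\<^sup>+x. \<integral>\<^sup>+v. ennreal (exp (- v) / v) * indicator {0<..} v *
        (ennreal (exp (- (1 / v) * x) * gaussQ (sqrt (a * x))) * indicator {0<..} x) \<partial>lborel \<partial>lborel)"
  proof (intro nn_integral_cong)
    fix x :: real
    show "ennreal (indicator {0<..} x * (2 * besselK0 (2 * sqrt x))) * ennreal (gaussQ (sqrt (c * x / 2)))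
      = (\<integral>\<^sup>+v. ennreal (exp (- v) / v) * indicator {0<..} v *
        (ennreal (exp (- (1 / v) * x) * gaussQ (sqrt (a * x))) * indicator {0<..} x) \<partial>lborel)"
    proof (cases "x > 0")
      case False
      then show ?thesis by simp
    next
      case True
      have sx: "sqrt x > 0" using True by simp
      have cx: "c * x / 2 = a * x" by (simp add: a_def)
      have "ennreal (indicator {0<..} x * (2 * besselK0 (2 * sqrt x))) * ennreal (gaussQ (sqrt (c * x / 2)))
          = ennreal (2 * besselK0 (2 * sqrt x)) * ennreal (gaussQ (sqrt (a * x)))"
        using True cx by simp
      also have "\<dots> = (\<integral>\<^sup>+v. ennreal (exp (- v - (sqrt x)\<^sup>2 / v) / v) * indicator {0<..} v \<partial>lborel) * ennreal (gaussQ (sqrt (a * x)))"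
        by (simp only: K0_nn[OF sx])
      also have "\<dots> = (\<integral>\<^sup>+v. ennreal (exp (- v - (sqrt x)\<^sup>2 / v) / v) * indicator {0<..} v * ennreal (gaussQ (sqrt (a * x))) \<partial>lborel)"
        by (rule nn_integral_multc[symmetric]) measurable
      also have "\<dots> = (\<integral>\<^sup>+v. ennreal (exp (- v) / v) * indicator {0<..} v *
        (ennreal (exp (- (1 / v) * x) * gaussQ (sqrt (a * x))) * indicator {0<..} x) \<partial>lborel)"
      proof (intro nn_integral_cong)
        fix v :: real
        have "exp (- v - (sqrt x)\<^sup>2 / v) / v = exp (- v) / v * exp (- (1 / v) * x)"
          using True by (simp add: exp_diff exp_minus field_simps)
        then show "ennreal (exp (- v - (sqrt x)\<^sup>2 / v) / v) * indicator {0<..} v * ennreal (gaussQ (sqrt (a * x)))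
          = ennreal (exp (- v) / v) * indicator {0<..} v *
            (ennreal (exp (- (1 / v) * x) * gaussQ (sqrt (a * x))) * indicator {0<..} x)"
          using True by (cases "v > 0") (simp_all add: ennreal_mult[symmetric] gaussQ_nonneg ac_simps)
      qed
      finally show ?thesis .
    qed
  qed
  also have "\<dots> = (\<integral>\<^sup>+v. \<integral>\<^sup>+x. ennreal (exp (- v) / v) * indicator {0<..} v *
        (ennreal (exp (- (1 / v) * x) * gaussQ (sqrt (a * x))) * indicator {0<..} x) \<partial>lborel \<partial>lborel)"
    by (rule lborel_pair.Fubini') measurable
  also have "\<dots> = (\<integral>\<^sup>+v. ennreal (Phi c v) * indicator {0<..} v \<partial>lborel)"
  proof (intro nn_integral_cong)
    fix v :: real
    show "(\<integral>\<^sup>+x. ennreal (exp (- v) / v) * indicator {0<..} v *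
        (ennreal (exp (- (1 / v) * x) * gaussQ (sqrt (a * x))) * indicator {0<..} x) \<partial>lborel)
       = ennreal (Phi c v) * indicator {0<..} v"
    proof (cases "v > 0")
      case False
      then show ?thesis by simp
    next
      case True
      have "(\<integral>\<^sup>+x. ennreal (exp (- v) / v) * indicator {0<..} v *
        (ennreal (exp (- (1 / v) * x) * gaussQ (sqrt (a * x))) * indicator {0<..} x) \<partial>lborel)
        = ennreal (exp (- v) / v) * (\<integral>\<^sup>+x. ennreal (exp (- (1 / v) * x) * gaussQ (sqrt (a * x))) * indicator {0<..} x \<partial>lborel)"
        using True by (subst nn_integral_cmult[symmetric]) (auto intro!: nn_integral_cong)
      also have "\<dots> = ennreal (exp (- v) / v) * ennreal ((1 - sqrt (a / (a + 2 * (1 / v)))) / (2 * (1 / v)))"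
        using LA[OF apos, of "1 / v"] True by simp
      also have "\<dots> = ennreal (Phi c v)"
      proof -
        have "0 < 2 / v" using True by simp
        then have p2: "0 < a + 2 * (1 / v)" using apos by (simp add: add_pos_pos)
        then have "a / (a + 2 * (1 / v)) \<le> 1" using True by (subst divide_le_eq_1_pos) auto
        then have "sqrt (a / (a + 2 * (1 / v))) \<le> 1" by simp
        then have nn: "0 \<le> (1 - sqrt (a / (a + 2 * (1 / v)))) / (2 * (1 / v))" using True by simp
        show ?thesis
          by (subst ennreal_mult[symmetric, OF _ nn]) (use True alg_alpha[OF c True] in \<open>auto simp: a_def\<close>)
      qed
      finally show ?thesis using True by simp
    qed
  qed
  finally show ?thesis .
qed



lemma Phi_meas[measurable]: "Phi c \<in> borel_measurable borel"
  unfolding Phi_def[abs_def] by measurable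

lemma tricomi_nonneg: "0 \<le> tricomiU 1 1 z"
  unfolding tricomiU_def set_lebesgue_integral_def
  by (auto intro!: Bochner_Integration.integral_nonneg split: split_indicator)

lemma alg_beta: assumes "c > 0" "v > 0" "0 < sin t"
  shows "sqrt (4 * (sin t)\<^sup>2 / c) * sin t / (4 * (sin t)\<^sup>2 / c + v)
       = sqrt c / 2 * ((sin t)\<^sup>2 / ((sin t)\<^sup>2 + c * v / 4))"
proof -
  define q where "q = sqrt c"
  have q: "q > 0" "c = q\<^sup>2" using assms by (auto simp: q_def)
  have "sqrt (4 * (sin t)\<^sup>2 / c) = 2 * sin t / q"
    using assms by (simp add: real_sqrt_divide real_sqrt_mult q_def)
  moreover have "2 * sin t / q * sin t / (4 * (sin t)\<^sup>2 / q\<^sup>2 + v) = q / 2 * ((sin t)\<^sup>2 / ((sin t)\<^sup>2 + q\<^sup>2 * v / 4))"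
  proof -
    have p1: "(sin t)\<^sup>2 * 4 + q\<^sup>2 * v > 0" using q assms by (simp add: add_pos_pos)
    show ?thesis using q(1) p1 assms by (simp add: field_simps power2_eq_square)
  qed
  ultimately show ?thesis using assms(1) unfolding q_def by (simp add: less_imp_le)
qed

lemma alg_gamma: assumes "c > 0" "v > 0"
  shows "exp (- v) * (sqrt c / 2 * (pi / 2 * (1 - sqrt (c * v / 4 / (1 + c * v / 4)))))
       = sqrt c * pi / 2 * Phi c v"
proof -
  have "c * v / 4 / (1 + c * v / 4) = c * v / (c * v + 4)"
    using assms by (simp add: field_simps)
  then show ?thesis unfolding Phi_def by simp
qed

lemma RHS_part: assumes c: "c > 0"
  shows "(LBINT \<theta>=0..pi/2. exp (2 * (sin \<theta>)\<^sup>2 / c) * whittakerW (-1/2) 0 (4 * (sin \<theta>)\<^sup>2 / c) * sin \<theta>)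
       = sqrt c * pi / 2 * enn2real (\<integral>\<^sup>+v. ennreal (Phi c v) * indicator {0<..} v \<partial>lborel)"
proof -
  define k where "k \<theta> = exp (2 * (sin \<theta>)\<^sup>2 / c) * whittakerW (-1/2) 0 (4 * (sin \<theta>)\<^sup>2 / c) * sin \<theta>" for \<theta>
  define z where "z \<theta> = 4 * (sin \<theta>)\<^sup>2 / c" for \<theta>
  have km[measurable]: "k \<in> borel_measurable borel"
    unfolding k_def whittakerW_def by measurable
  have sinpos: "0 < sin \<theta>" if "\<theta> \<in> {0<..<pi/2}" for \<theta>
    using that by (intro sin_gt_zero) auto
  have keq: "k \<theta> = sqrt (z \<theta>) * sin \<theta> * tricomiU 1 1 (z \<theta>)" if "\<theta> \<in> {0<..<pi/2}" for \<theta>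
  proof -
    have zp: "z \<theta> > 0" using sinpos[OF that] c by (simp add: z_def)
    have "exp (2 * (sin \<theta>)\<^sup>2 / c) * exp (- z \<theta> / 2) = 1"
      by (simp add: z_def exp_minus field_simps)
    then show ?thesis using zp
      unfolding k_def whittakerW_def z_def[symmetric]
      by (simp add: powr_half_sqrt mult.assoc[symmetric])
  qed
  have knn: "0 \<le> indicator {0<..<pi/2} \<theta> *\<^sub>R k \<theta>" for \<theta>
  proof (cases "\<theta> \<in> {0<..<pi/2}")
    case True
    have z0: "0 \<le> z \<theta>" using c by (simp add: z_def)
    have "0 \<le> k \<theta>" unfolding keq[OF True] using z0 sinpos[OF True]
      by (intro mult_nonneg_nonneg tricomi_nonneg) auto
    then show ?thesis using True by simp
  qed simp
  have "(LBINT \<theta>=0..pi/2. k \<theta>) = (\<integral>\<theta>. indicator {0<..<pi/2} \<theta> *\<^sub>R k \<theta> \<partial>lborel)"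
    by (simp add: interval_lebesgue_integral_def set_lebesgue_integral_def zero_ereal_def)
  also have "\<dots> = enn2real (\<integral>\<^sup>+\<theta>. ennreal (indicator {0<..<pi/2} \<theta> *\<^sub>R k \<theta>) \<partial>lborel)"
    using knn by (intro integral_eq_nn_integral AE_I2) auto
  also have "(\<integral>\<^sup>+\<theta>. ennreal (indicator {0<..<pi/2} \<theta> *\<^sub>R k \<theta>) \<partial>lborel)
      = (\<integral>\<^sup>+\<theta>. \<integral>\<^sup>+v. ennreal (sqrt (4 * (sin \<theta>)\<^sup>2 / c) * sin \<theta> * (exp (- v) / (4 * (sin \<theta>)\<^sup>2 / c + v)))
           * indicator {0<..<pi/2} \<theta> * indicator {0<..} v \<partial>lborel \<partial>lborel)"
  proof (intro nn_integral_cong)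
    fix \<theta> :: real
    show "ennreal (indicator {0<..<pi/2} \<theta> *\<^sub>R k \<theta>)
      = (\<integral>\<^sup>+v. ennreal (sqrt (4 * (sin \<theta>)\<^sup>2 / c) * sin \<theta> * (exp (- v) / (4 * (sin \<theta>)\<^sup>2 / c + v)))
           * indicator {0<..<pi/2} \<theta> * indicator {0<..} v \<partial>lborel)"
    proof (cases "\<theta> \<in> {0<..<pi/2}")
      case False
      then show ?thesis by simp
    next
      case True
      have zp: "z \<theta> > 0" using sinpos[OF True] c by (simp add: z_def)
      have sp: "0 \<le> sqrt (z \<theta>) * sin \<theta>" using sinpos[OF True] zp by simp
      have "ennreal (indicator {0<..<pi/2} \<theta> *\<^sub>R k \<theta>) = ennreal (sqrt (z \<theta>) * sin \<theta>) * ennreal (tricomiU 1 1 (z \<theta>))"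
        using True sp by (simp add: keq[OF True] ennreal_mult tricomi_nonneg)
      also have "\<dots> = ennreal (sqrt (z \<theta>) * sin \<theta>) * (\<integral>\<^sup>+v. ennreal (exp (- v) / (z \<theta> + v)) * indicator {0<..} v \<partial>lborel)"
        by (simp only: tricomi11[OF zp])
      also have "\<dots> = (\<integral>\<^sup>+v. ennreal (sqrt (z \<theta>) * sin \<theta>) * (ennreal (exp (- v) / (z \<theta> + v)) * indicator {0<..} v) \<partial>lborel)"
        by (rule nn_integral_cmult[symmetric]) measurable
      also have "\<dots> = (\<integral>\<^sup>+v. ennreal (sqrt (4 * (sin \<theta>)\<^sup>2 / c) * sin \<theta> * (exp (- v) / (4 * (sin \<theta>)\<^sup>2 / c + v)))
           * indicator {0<..<pi/2} \<theta> * indicator {0<..} v \<partial>lborel)"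
      proof (intro nn_integral_cong)
        fix v :: real
        show "ennreal (sqrt (z \<theta>) * sin \<theta>) * (ennreal (exp (- v) / (z \<theta> + v)) * indicator {0<..} v)
          = ennreal (sqrt (4 * (sin \<theta>)\<^sup>2 / c) * sin \<theta> * (exp (- v) / (4 * (sin \<theta>)\<^sup>2 / c + v)))
           * indicator {0<..<pi/2} \<theta> * indicator {0<..} v"
          using True sp zp unfolding z_def
          by (cases "v > 0") (simp_all add: ennreal_mult[symmetric])
      qed
      finally show ?thesis .
    qed
  qed
  also have "\<dots> = (\<integral>\<^sup>+v. \<integral>\<^sup>+\<theta>. ennreal (sqrt (4 * (sin \<theta>)\<^sup>2 / c) * sin \<theta> * (exp (- v) / (4 * (sin \<theta>)\<^sup>2 / c + v)))
           * indicator {0<..<pi/2} \<theta> * indicator {0<..} v \<partial>lborel \<partial>lborel)"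
    by (rule lborel_pair.Fubini'[symmetric]) measurable
  also have "\<dots> = (\<integral>\<^sup>+v. ennreal (sqrt c * pi / 2) * (ennreal (Phi c v) * indicator {0<..} v) \<partial>lborel)"
  proof (intro nn_integral_cong)
    fix v :: real
    show "(\<integral>\<^sup>+\<theta>. ennreal (sqrt (4 * (sin \<theta>)\<^sup>2 / c) * sin \<theta> * (exp (- v) / (4 * (sin \<theta>)\<^sup>2 / c + v)))
           * indicator {0<..<pi/2} \<theta> * indicator {0<..} v \<partial>lborel)
        = ennreal (sqrt c * pi / 2) * (ennreal (Phi c v) * indicator {0<..} v)"
    proof (cases "v > 0")
      case False
      then show ?thesis by simp
    next
      case True
      have b: "c * v / 4 > 0" using c True by simp
      have "(\<integral>\<^sup>+\<theta>. ennreal (sqrt (4 * (sin \<theta>)\<^sup>2 / c) * sin \<theta> * (exp (- v) / (4 * (sin \<theta>)\<^sup>2 / c + v)))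
           * indicator {0<..<pi/2} \<theta> * indicator {0<..} v \<partial>lborel)
         = (\<integral>\<^sup>+\<theta>. ennreal (exp (- v) * (sqrt c / 2)) * (ennreal ((sin \<theta>)\<^sup>2 / ((sin \<theta>)\<^sup>2 + c * v / 4)) * indicator {0<..<pi/2} \<theta>) \<partial>lborel)"
      proof (intro nn_integral_cong)
        fix \<theta> :: real
        show "ennreal (sqrt (4 * (sin \<theta>)\<^sup>2 / c) * sin \<theta> * (exp (- v) / (4 * (sin \<theta>)\<^sup>2 / c + v)))
           * indicator {0<..<pi/2} \<theta> * indicator {0<..} v
          = ennreal (exp (- v) * (sqrt c / 2)) * (ennreal ((sin \<theta>)\<^sup>2 / ((sin \<theta>)\<^sup>2 + c * v / 4)) * indicator {0<..<pi/2} \<theta>)"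
        proof (cases "\<theta> \<in> {0<..<pi/2}")
          case False
          then show ?thesis by simp
        next
          case True2: True
          have e: "sqrt (4 * (sin \<theta>)\<^sup>2 / c) * sin \<theta> * (exp (- v) / (4 * (sin \<theta>)\<^sup>2 / c + v))
              = exp (- v) * (sqrt c / 2) * ((sin \<theta>)\<^sup>2 / ((sin \<theta>)\<^sup>2 + c * v / 4))"
          proof -
            have e1: "A * s * (E / D) = E * (A * s / D)" for A s E D :: real by simp
            have "sqrt (4 * (sin \<theta>)\<^sup>2 / c) * sin \<theta> * (exp (- v) / (4 * (sin \<theta>)\<^sup>2 / c + v))
               = exp (- v) * (sqrt (4 * (sin \<theta>)\<^sup>2 / c) * sin \<theta> / (4 * (sin \<theta>)\<^sup>2 / c + v))" by (rule e1)
            also have "\<dots> = exp (- v) * (sqrt c / 2 * ((sin \<theta>)\<^sup>2 / ((sin \<theta>)\<^sup>2 + c * v / 4)))"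
              by (simp only: alg_beta[OF c True sinpos[OF True2]])
            finally show ?thesis by (simp only: mult.assoc)
          qed
          have nn: "0 \<le> (sin \<theta>)\<^sup>2 / ((sin \<theta>)\<^sup>2 + c * v / 4)" using b by (simp add: add_nonneg_pos less_imp_le)
          show ?thesis using True True2 c nn unfolding e
            by (simp add: ennreal_mult[symmetric])
        qed
      qed
      also have "\<dots> = ennreal (exp (- v) * (sqrt c / 2)) * ennreal (pi / 2 * (1 - sqrt (c * v / 4 / (1 + c * v / 4))))"
        by (subst nn_integral_cmult) (auto simp: LB[OF b])
      also have "\<dots> = ennreal (sqrt c * pi / 2) * (ennreal (Phi c v) * indicator {0<..} v)"
      proof -
        have "c * v / 4 / (1 + c * v / 4) \<le> 1" using b by simp
        then have "sqrt (c * v / 4 / (1 + c * v / 4)) \<le> 1" by simp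
        then have nn: "0 \<le> pi / 2 * (1 - sqrt (c * v / 4 / (1 + c * v / 4)))" by simp
        have f1: "ennreal (exp (- v) * (sqrt c / 2)) * ennreal (pi / 2 * (1 - sqrt (c * v / 4 / (1 + c * v / 4))))
            = ennreal (sqrt c * pi / 2 * Phi c v)"
          using alg_gamma[OF c True] c nn by (subst ennreal_mult[symmetric]) (auto simp: ac_simps)
        have p0: "0 \<le> Phi c v"
        proof -
          have "0 < c * v" using b by simp
          then have "c * v / (c * v + 4) \<le> 1" by simp
          then have "sqrt (c * v / (c * v + 4)) \<le> 1" by simp
          then show ?thesis unfolding Phi_def by simp
        qed
        have m: "ennreal (sqrt c * pi / 2) * ennreal (Phi c v) = ennreal (sqrt c * pi / 2 * Phi c v)"
          by (rule ennreal_mult[symmetric]) (use p0 c in auto)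
        show ?thesis unfolding f1 using True m by simp
      qed
      finally show ?thesis .
    qed
  qed
  also have "\<dots> = ennreal (sqrt c * pi / 2) * (\<integral>\<^sup>+v. ennreal (Phi c v) * indicator {0<..} v \<partial>lborel)"
    by (rule nn_integral_cmult) measurable
  finally have "(LBINT \<theta>=0..pi/2. k \<theta>) = enn2real (ennreal (sqrt c * pi / 2) * (\<integral>\<^sup>+v. ennreal (Phi c v) * indicator {0<..} v \<partial>lborel))" .
  also have "\<dots> = sqrt c * pi / 2 * enn2real (\<integral>\<^sup>+v. ennreal (Phi c v) * indicator {0<..} v \<partial>lborel)"
    using c by (simp add: enn2real_mult)
  finally show ?thesis unfolding k_def .
qed



theorem mainTheorem7:
  fixes \<rho> L \<eta> :: real and M :: "'a measure" and X :: "'a \<Rightarrow> real"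
  assumes "\<rho> > 0" and "L \<ge> 1" and "\<eta> > 0"
    and "prob_space M"
    and "distributed M lborel X
           (\<lambda>x. ennreal (indicator {0<..} x * (2 * besselK0 (2 * sqrt x))))"
  shows "prob_space.expectation M (\<lambda>\<omega>. gaussQ (sqrt (\<rho> * L\<^sup>2 * \<eta> * X \<omega> / 2)))
       = 2 / (pi * L * sqrt (\<rho> * \<eta>)) *
         (LBINT \<theta>=0..pi/2. exp (2 * (sin \<theta>)\<^sup>2 / (\<rho> * L\<^sup>2 * \<eta>)) *
            whittakerW (-1/2) 0 (4 * (sin \<theta>)\<^sup>2 / (\<rho> * L\<^sup>2 * \<eta>)) * sin \<theta>)"
proof -
  define c where "c = \<rho> * L\<^sup>2 * \<eta>"
  have c: "c > 0" using assms by (simp add: c_def)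
  define E where "E = enn2real (\<integral>\<^sup>+v. ennreal (Phi c v) * indicator {0<..} v \<partial>lborel)"
  have L: "prob_space.expectation M (\<lambda>\<omega>. gaussQ (sqrt (\<rho> * L\<^sup>2 * \<eta> * X \<omega> / 2))) = E"
    using LHS_part[OF c assms(4,5)] unfolding c_def E_def .
  have R: "(LBINT \<theta>=0..pi/2. exp (2 * (sin \<theta>)\<^sup>2 / (\<rho> * L\<^sup>2 * \<eta>)) *
            whittakerW (-1/2) 0 (4 * (sin \<theta>)\<^sup>2 / (\<rho> * L\<^sup>2 * \<eta>)) * sin \<theta>) = sqrt c * pi / 2 * E"
    using RHS_part[OF c] unfolding c_def E_def .
  have sc: "sqrt c = L * sqrt (\<rho> * \<eta>)"
    using assms unfolding c_def by (simp add: real_sqrt_mult ac_simps)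
  have pos: "L * sqrt (\<rho> * \<eta>) > 0" using assms by simp
  show ?thesis unfolding L R sc using pos assms(1-3) by (simp add: field_simps)
qed


end
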